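(* Consider the problem $\min_{x\in\mathbb{R}^n} f(x)$ subject to $g_i(x)\le 0$, $i=1,\dots,m$, where $f:\mathbb{R}^n\to\mathbb{R}$ is convex, continuous and bounded below and each $g_i$ is differentiable and $\mu_i$-strongly convex ($\mu_i>0$). Assume there is $\tilde x$ with $g_i(\tilde x)<0$ for all $i$, and that for every minimizer $x_0^*$ of $f$ over $\mathbb{R}^n$ some $i$ has $g_i(x_0^* )>0$. Let $x_i^*=\arg\min_{x\in\mathbb{R}^n}g_i(x)$ and $$\mathcal{X}:=\mathcal{B}\Big(\tilde x,\ \min_{i\in[m]}2\sqrt{\tfrac{-2g_i(x_i^* )}{\mu_i}}\Big).$$ Then the optimal solution $x^*$ of the problem lies in the interior of $\mathcal{X}$.
   Context: $\mathcal{B}(x,r)=\{z:\|z-x\|\le r\}$ is the closed Euclidean ball. $x^*$ denotes an optimal solution of the problem. *)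

theory Defs
  imports "HOL-Analysis.Analysis"
begin

definition strongly_convex_on :: "'a::real_normed_vector set \<Rightarrow> real \<Rightarrow> ('a \<Rightarrow> real) \<Rightarrow> bool" where
  "strongly_convex_on S \<mu> g \<longleftrightarrow> convex S \<and>
     (\<forall>x\<in>S. \<forall>y\<in>S. \<forall>t::real. 0 \<le> t \<and> t \<le> 1 \<longrightarrow>
        g ((1 - t) *\<^sub>R x + t *\<^sub>R y) \<le> (1 - t) * g x + t * g y - \<mu> / 2 * t * (1 - t) * (norm (x - y))\<^sup>2)"

end

theory Submission
  imports Defs
begin

lemma sc_growth:
  fixes g :: "'a::real_normed_vector \<Rightarrow> real"
  assumes sc: "strongly_convex_on UNIV \<mu> g" and mu: "\<mu> > 0"
    and zmin: "\<forall>y. g z \<le> g y"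
  shows "g z + \<mu> / 2 * (norm (x - z))\<^sup>2 \<le> g x"
proof (rule ccontr)
  assume H: "\<not> ?thesis"
  define d where "d = (norm (x - z))\<^sup>2"
  define e where "e = g x - g z"
  have e0: "e \<ge> 0" using zmin e_def by auto
  have lt: "e < \<mu>/2 * d" using H d_def e_def by auto
  have "d \<ge> 0" unfolding d_def by simp
  moreover have "d \<noteq> 0" using lt e0 by auto
  ultimately have d0: "d > 0" by simp
  define t where "t = (\<mu>/2 * d - e) / (\<mu> * d)"
  have "\<mu>/2 * d - e > 0" using lt by simp
  hence t0: "t > 0" unfolding t_def using d0 mu by simp
  have t1: "t \<le> 1/2" using e0 d0 mu unfolding t_def by (simp add: field_simps)
  have "g ((1 - t) *\<^sub>R z + t *\<^sub>R x) \<le> (1 - t) * g z + t * g x - \<mu> / 2 * t * (1 - t) * (norm (z - x))\<^sup>2"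
    using sc t0 t1 unfolding strongly_convex_on_def by auto
  moreover have "g z \<le> g ((1 - t) *\<^sub>R z + t *\<^sub>R x)" using zmin by auto
  moreover have "norm (z - x) = norm (x - z)" by (simp add: norm_minus_commute)
  ultimately have "0 \<le> t * e - \<mu> / 2 * t * (1 - t) * d" unfolding d_def e_def
    by (simp add: algebra_simps)
  hence "0 \<le> t * (e - \<mu> / 2 * (1 - t) * d)" by (simp add: algebra_simps)
  hence A: "0 \<le> e - \<mu> / 2 * (1 - t) * d" using t0
    by (simp add: zero_le_mult_iff)
  define P where "P = \<mu> * d"
  have X: "\<mu>/2*(1-t)*d = P/4 + e/2" unfolding P_def t_def using d0 mu by (simp add: field_simps)
  have "e < P/2" using lt P_def by simp
  then show False using A X by linarith
qed

lemma sc_exists_min: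
  fixes g :: "'a::euclidean_space \<Rightarrow> real"
  assumes sc: "strongly_convex_on UNIV \<mu> g" and mu: "\<mu> > 0"
    and cont: "continuous_on UNIV g"
  shows "\<exists>z. \<forall>y. g z \<le> g y"
proof -
  have "compact (g ` sphere 0 1)"
    by (rule compact_continuous_image) (use cont continuous_on_subset in auto)
  then obtain B where B: "\<And>v. v \<in> g ` sphere 0 1 \<Longrightarrow> \<bar>v\<bar> \<le> B"
    using compact_imp_bounded bounded_real by metis
  have Bs: "-B \<le> g u" if "norm u = 1" for u using B[of "g u"] that by force
  define S where "S = {x. g x \<le> g 0}"
  have bnd: "norm x \<le> max 1 (1 + 2 * (g 0 + B) / \<mu>)" if "x \<in> S" for x
  proof (cases "norm x \<le> 1")
    case True then show ?thesis by simp
  next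
    case False
    define n where "n = norm x"
    define t where "t = 1 / n"
    have n1: "n > 1" using False n_def by simp
    have t0: "0 \<le> t" "t \<le> 1" using n1 t_def by auto
    have "x \<noteq> 0" using n1 n_def by auto
    have conv: "g ((1 - t) *\<^sub>R 0 + t *\<^sub>R x) \<le> (1 - t) * g 0 + t * g x - \<mu> / 2 * t * (1 - t) * (norm (0 - x))\<^sup>2"
      using sc t0 unfolding strongly_convex_on_def by blast
    have "norm (t *\<^sub>R x) = 1" using n1 t_def n_def \<open>x \<noteq> 0\<close> by simp
    hence gb: "-B \<le> g (t *\<^sub>R x)" by (rule Bs)
    have "-B \<le> (1 - t) * g 0 + t * g x - \<mu> / 2 * t * (1 - t) * n\<^sup>2"
      using gb conv by (simp add: n_def)
    moreover have "t * g x \<le> t * g 0" using that S_def t0 by (simp add: mult_left_mono)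
    hence "(1 - t) * g 0 + t * g x \<le> g 0" by (simp add: algebra_simps)
    ultimately have "-B \<le> g 0 - \<mu> / 2 * t * (1 - t) * n\<^sup>2" by linarith
    moreover have "t * (1 - t) * n\<^sup>2 = n - 1" unfolding t_def using n1 by (simp add: field_simps power2_eq_square)
    ultimately have "-B \<le> g 0 - \<mu> / 2 * (n - 1)" by (metis mult.assoc)
    hence "\<mu> * (n - 1) \<le> 2 * (g 0 + B)" by simp
    hence "n - 1 \<le> 2 * (g 0 + B) / \<mu>" using mu by (simp add: field_simps)
    then show ?thesis using n_def by simp
  qed
  have "bounded S" unfolding bounded_iff using bnd by blast
  moreover have "closed S" unfolding S_def
    by (rule closed_Collect_le) (use cont in auto)
  ultimately have "compact S" by (simp add: compact_eq_bounded_closed)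
  moreover have "S \<noteq> {}" using S_def by auto
  ultimately obtain z where z: "z \<in> S" "\<And>y. y \<in> S \<Longrightarrow> g z \<le> g y"
    using continuous_attains_inf[of S g] cont continuous_on_subset by blast
  have "g z \<le> g y" for y
  proof (cases "y \<in> S")
    case True then show ?thesis using z by auto
  next
    case False
    have "g z \<le> g 0" using z(1) S_def by simp
    then show ?thesis using False S_def by simp
  qed
  then show ?thesis by blast
qed

theorem proposition3:
  fixes f :: "real ^ 'n \<Rightarrow> real"
    and g :: "nat \<Rightarrow> real ^ 'n \<Rightarrow> real"
    and \<mu> :: "nat \<Rightarrow> real"
    and m :: nat
    and xt :: "real ^ 'n"
    and xopt :: "real ^ 'n"
  assumes m_pos: "m \<ge> 1"
    and f_convex: "convex_on UNIV f"
    and f_cont: "continuous_on UNIV f"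
    and f_bdd: "bdd_below (range f)"
    and g_diff: "\<And>i x. i \<in> {1..m} \<Longrightarrow> g i differentiable (at x)"
    and mu_pos: "\<And>i. i \<in> {1..m} \<Longrightarrow> \<mu> i > 0"
    and g_sc: "\<And>i. i \<in> {1..m} \<Longrightarrow> strongly_convex_on UNIV (\<mu> i) (g i)"
    and slater: "\<And>i. i \<in> {1..m} \<Longrightarrow> g i xt < 0"
    and unconstr: "\<And>x0. (\<forall>x. f x0 \<le> f x) \<Longrightarrow> (\<exists>i\<in>{1..m}. g i x0 > 0)"
    and xopt_feas: "\<And>i. i \<in> {1..m} \<Longrightarrow> g i xopt \<le> 0"
    and xopt_opt: "\<And>x. (\<forall>i\<in>{1..m}. g i x \<le> 0) \<Longrightarrow> f xopt \<le> f x"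
  shows "xopt \<in> interior (cball xt
           (Min ((\<lambda>i. 2 * sqrt (- 2 * g i (arg_min (g i) (\<lambda>_. True)) / \<mu> i)) ` {1..m})))"
proof -
  have each: "dist xt xopt < 2 * sqrt (- 2 * g i (arg_min (g i) (\<lambda>_. True)) / \<mu> i)"
    if i: "i \<in> {1..m}" for i
  proof -
    have cont: "continuous_on UNIV (g i)"
      by (intro continuous_at_imp_continuous_on ballI differentiable_imp_continuous_within g_diff[OF i])
    obtain z0 where "\<forall>y. g i z0 \<le> g i y"
      using sc_exists_min[OF g_sc[OF i] mu_pos[OF i] cont] by blast
    hence "is_arg_min (g i) (\<lambda>_. True) z0" by (simp add: is_arg_min_def not_less)
    hence "is_arg_min (g i) (\<lambda>_. True) (arg_min (g i) (\<lambda>_. True))"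
      unfolding arg_min_def by (rule someI)
    define z where "z = arg_min (g i) (\<lambda>_. True)"
    have zmin: "\<forall>y. g i z \<le> g i y"
      using \<open>is_arg_min (g i) (\<lambda>_. True) (arg_min (g i) (\<lambda>_. True))\<close>
      unfolding z_def is_arg_min_def by (auto simp: not_less)
    define r where "r = sqrt (- 2 * g i z / \<mu> i)"
    have mu: "\<mu> i > 0" using mu_pos[OF i] .
    have g1: "g i z + \<mu> i / 2 * (norm (xt - z))\<^sup>2 \<le> g i xt"
      using sc_growth[OF g_sc[OF i] mu zmin] .
    have g2: "g i z + \<mu> i / 2 * (norm (xopt - z))\<^sup>2 \<le> g i xopt"
      using sc_growth[OF g_sc[OF i] mu zmin] .
    have "(norm (xt - z))\<^sup>2 < - 2 * g i z / \<mu> i"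
      using g1 slater[OF i] mu by (simp add: field_simps)
    hence a: "norm (xt - z) < r" unfolding r_def by (simp add: real_less_rsqrt)
    have "(norm (xopt - z))\<^sup>2 \<le> - 2 * g i z / \<mu> i"
      using g2 xopt_feas[OF i] mu by (simp add: field_simps)
    hence b: "norm (xopt - z) \<le> r" unfolding r_def by (simp add: real_le_rsqrt)
    have "dist xt xopt \<le> norm (xt - z) + norm (xopt - z)"
      by (metis dist_norm dist_triangle3 dist_commute)
    then show ?thesis using a b unfolding r_def z_def by linarith
  qed
  let ?R = "Min ((\<lambda>i. 2 * sqrt (- 2 * g i (arg_min (g i) (\<lambda>_. True)) / \<mu> i)) ` {1..m})"
  have "dist xt xopt < ?R"
    using each m_pos by (subst Min_gr_iff) auto
  then show ?thesis by simp
qed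

end
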